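(* Let $k$ be a field and let $A$ be a just infinite $k$-algebra which is countably generated as a $k$-algebra and does not satisfy a polynomial identity. Then the extended center $C(A)$ of $A$ is a field extension of $k$ of countable dimension over $k$.
   Context: All rings are associative unital algebras over a field. A $k$-algebra $A$ is called just infinite if $\dim_k(A)=\infty$ and every nonzero two-sided ideal of $A$ has finite codimension in $A$; just infinite algebras are prime. For a prime ring $A$, the (right) Martindale ring of quotients $Q_r(A)$ consists of equivalence classes of pairs $(I,f)$ where $I$ is a nonzero two-sided ideal of $A$ and $f\colon I\to A$ is a right $A$-module homomorphism, two pairs being equivalent if the maps agree on the intersection of their domains; addition is $(I,f)+(J,g)=(I\cap J,f+g)$ and multiplication $(I,f)(J,g)=(JI,f\circ g)$. The extended center $C(A)$ is the center of $Q_r(A)$ (equivalently, classes of pairs $(I,f)$ with $f$ an $(A,A)$-bimodule map); it is a field extension of $k$. *)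

theory Defs
  imports Complex_Main "HOL-Library.Countable_Set"
begin

definition k_algebra :: "('k::field \<Rightarrow> 'a::ring_1 \<Rightarrow> 'a) \<Rightarrow> bool" where
  "k_algebra sc \<longleftrightarrow> vector_space sc \<and>
     (\<forall>c x y. sc c (x * y) = sc c x * y \<and> sc c (x * y) = x * sc c y)"

text \<open>Two-sided ideals (closure under scalars is automatic in a unital algebra).\<close>
definition two_sided_ideal :: "'a::ring_1 set \<Rightarrow> bool" where
  "two_sided_ideal I \<longleftrightarrow> 0 \<in> I \<and> (\<forall>x\<in>I. \<forall>y\<in>I. x + y \<in> I) \<and> (\<forall>x\<in>I. - x \<in> I) \<and>
     (\<forall>x\<in>I. \<forall>a. a * x \<in> I \<and> x * a \<in> I)"

definition infinite_dimensional :: "('k::field \<Rightarrow> 'a::ring_1 \<Rightarrow> 'a) \<Rightarrow> bool" where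
  "infinite_dimensional sc \<longleftrightarrow> \<not> (\<exists>F. finite F \<and> module.span sc F = UNIV)"

text \<open>I has finite codimension: A/I is finite dimensional, i.e. I together with
  finitely many elements spans A.\<close>
definition finite_codim :: "('k::field \<Rightarrow> 'a::ring_1 \<Rightarrow> 'a) \<Rightarrow> 'a set \<Rightarrow> bool" where
  "finite_codim sc I \<longleftrightarrow> (\<exists>F. finite F \<and> module.span sc (I \<union> F) = UNIV)"

definition just_infinite :: "('k::field \<Rightarrow> 'a::ring_1 \<Rightarrow> 'a) \<Rightarrow> bool" where
  "just_infinite sc \<longleftrightarrow> infinite_dimensional sc \<and>
     (\<forall>I. two_sided_ideal I \<and> I \<noteq> {0} \<longrightarrow> finite_codim sc I)"

definition gen_subalgebra :: "('k::field \<Rightarrow> 'a::ring_1 \<Rightarrow> 'a) \<Rightarrow> 'a set \<Rightarrow> 'a set" where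
  "gen_subalgebra sc S = \<Inter>{B. S \<subseteq> B \<and> 1 \<in> B \<and> (\<forall>x\<in>B. \<forall>y\<in>B. x + y \<in> B \<and> x * y \<in> B) \<and>
       (\<forall>c. \<forall>x\<in>B. sc c x \<in> B)}"

definition countably_generated :: "('k::field \<Rightarrow> 'a::ring_1 \<Rightarrow> 'a) \<Rightarrow> bool" where
  "countably_generated sc \<longleftrightarrow> (\<exists>S. countable S \<and> gen_subalgebra sc S = UNIV)"

text \<open>Noncommutative polynomials in the free algebra k<x_0, x_1, ...> are represented
  by their (finitely supported) coefficient functions on words (lists of variable
  indices); evaluation at a substitution sigma of the variables.\<close>
definition nc_eval :: "('k::field \<Rightarrow> 'a::ring_1 \<Rightarrow> 'a) \<Rightarrow> (nat list \<Rightarrow> 'k) \<Rightarrow> (nat \<Rightarrow> 'a) \<Rightarrow> 'a" where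
  "nc_eval sc f \<sigma> = (\<Sum>w\<in>{w. f w \<noteq> 0}. sc (f w) (prod_list (map \<sigma> w)))"

definition satisfies_PI :: "('k::field \<Rightarrow> 'a::ring_1 \<Rightarrow> 'a) \<Rightarrow> bool" where
  "satisfies_PI sc \<longleftrightarrow> (\<exists>f::nat list \<Rightarrow> 'k. finite {w. f w \<noteq> 0} \<and> (\<exists>w. f w \<noteq> 0) \<and>
       (\<forall>\<sigma>. nc_eval sc f \<sigma> = 0))"

text \<open>Representatives of elements of the extended center: pairs (I, f) with I a nonzero
  two-sided ideal and f : I \<rightarrow> A an (A,A)-bimodule map (only its values on I matter).\<close>
definition ext_center_reps :: "('a::ring_1 set \<times> ('a \<Rightarrow> 'a)) set" where
  "ext_center_reps = {(I, f). two_sided_ideal I \<and> I \<noteq> {0} \<and>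
      (\<forall>x\<in>I. \<forall>y\<in>I. f (x + y) = f x + f y) \<and>
      (\<forall>x\<in>I. \<forall>a. f (a * x) = a * f x \<and> f (x * a) = f x * a)}"

text \<open>Here addition and
  k-scaling of classes are computed on representatives ((I,f)+(J,g) = (I\<inter>J, f+g),
  c(I,f) = (I, c f)), and two representatives define the same class iff they agree on the
  intersection of their domains.\<close>
definition ext_center_countable_dim :: "('k::field \<Rightarrow> 'a::ring_1 \<Rightarrow> 'a) \<Rightarrow> bool" where
  "ext_center_countable_dim sc \<longleftrightarrow>
     (\<exists>B. countable B \<and> B \<subseteq> ext_center_reps \<and>
        (\<forall>p\<in>ext_center_reps. \<exists>F c. finite F \<and> F \<subseteq> B \<and>
           (\<forall>x \<in> fst p \<inter> \<Inter>(fst ` F). snd p x = (\<Sum>q\<in>F. sc (c q) (snd q x)))))"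

end

theory Submission
  imports Defs "HOL-Combinatorics.Permutations"
begin

lemma alt_perm_sum:
  fixes t :: "(nat \<Rightarrow> nat) \<Rightarrow> 'b::ring_1"
  assumes S: "finite S" and pq: "p \<in> S" "q \<in> S" "p \<noteq> q"
    and tt: "\<And>\<pi>. \<pi> permutes S \<Longrightarrow> t (transpose p q \<circ> \<pi>) = t \<pi>"
  shows "(\<Sum>\<pi>\<in>{\<pi>. \<pi> permutes S}. of_int (sign \<pi>) * t \<pi>) = 0"
proof -
  let ?\<tau> = "transpose p q"
  define E where "E = {\<pi>. \<pi> permutes S \<and> evenperm \<pi>}"
  define Od where "Od = {\<pi>. \<pi> permutes S \<and> \<not> evenperm \<pi>}"
  have fin: "finite {\<pi>. \<pi> permutes S}" using S by (rule finite_permutations)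
  have split: "{\<pi>. \<pi> permutes S} = E \<union> Od" "E \<inter> Od = {}" unfolding E_def Od_def by auto
  have finE: "finite E" "finite Od" using fin split by auto
  have \<tau>perm: "?\<tau> permutes S" using pq(1,2) by (rule permutes_swap_id)
  have \<tau>\<tau>: "?\<tau> \<circ> ?\<tau> = id" by (simp add: fun_eq_iff)
  have permut: "permutation \<pi>" if "\<pi> permutes S" for \<pi>
    using that S permutation_permutes by blast
  have ev\<tau>: "evenperm (?\<tau> \<circ> \<pi>) \<longleftrightarrow> \<not> evenperm \<pi>" if "\<pi> permutes S" for \<pi>
    using evenperm_comp[OF permutation_swap_id permut[OF that], of p q] evenperm_swap[of p q] pq(3) by simp
  have img: "Od = (\<lambda>\<pi>. ?\<tau> \<circ> \<pi>) ` E"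
  proof
    show "Od \<subseteq> (\<lambda>\<pi>. ?\<tau> \<circ> \<pi>) ` E"
    proof
      fix \<pi> assume "\<pi> \<in> Od"
      then have "\<pi> permutes S" "\<not> evenperm \<pi>" unfolding Od_def by auto
      then have "?\<tau> \<circ> \<pi> \<in> E" unfolding E_def using ev\<tau> permutes_compose \<tau>perm by blast
      moreover have "\<pi> = ?\<tau> \<circ> (?\<tau> \<circ> \<pi>)" using \<tau>\<tau> by (simp add: o_assoc)
      ultimately show "\<pi> \<in> (\<lambda>\<pi>. ?\<tau> \<circ> \<pi>) ` E" by blast
    qed
    show "(\<lambda>\<pi>. ?\<tau> \<circ> \<pi>) ` E \<subseteq> Od"
      unfolding E_def Od_def using ev\<tau> permutes_compose \<tau>perm by blast
  qed
  have inj: "inj_on (\<lambda>\<pi>. ?\<tau> \<circ> \<pi>) E"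
    by (rule inj_onI) (metis \<tau>\<tau> o_assoc id_comp)
  have sE: "sign \<pi> = 1" if "\<pi> \<in> E" for \<pi> using that unfolding E_def sign_def by simp
  have sO: "sign \<pi> = -1" if "\<pi> \<in> Od" for \<pi> using that unfolding Od_def sign_def by simp
  have "(\<Sum>\<pi>\<in>Od. of_int (sign \<pi>) * t \<pi>) = (\<Sum>\<pi>\<in>Od. - t \<pi>)"
    using sO by (intro sum.cong) auto
  also have "\<dots> = (\<Sum>\<pi>\<in>E. - t (?\<tau> \<circ> \<pi>))"
    unfolding img by (subst sum.reindex[OF inj]) simp
  also have "\<dots> = (\<Sum>\<pi>\<in>E. - t \<pi>)"
    using tt unfolding E_def by (intro sum.cong) auto
  finally have O': "(\<Sum>\<pi>\<in>Od. of_int (sign \<pi>) * t \<pi>) = - (\<Sum>\<pi>\<in>E. t \<pi>)"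
    by (simp add: sum_negf)
  have E': "(\<Sum>\<pi>\<in>E. of_int (sign \<pi>) * t \<pi>) = (\<Sum>\<pi>\<in>E. t \<pi>)"
    using sE by (intro sum.cong) auto
  show ?thesis unfolding split(1) sum.union_disjoint[OF finE split(2)] O' E' by simp
qed

definition stdp :: "nat \<Rightarrow> (nat \<Rightarrow> 'a::ring_1) \<Rightarrow> 'a" where
  "stdp n y = (\<Sum>\<pi>\<in>{\<pi>. \<pi> permutes {..<n}}. of_int (sign \<pi>) * prod_list (map (y \<circ> \<pi>) [0..<n]))"

lemma stdp_alt:
  assumes "p < n" "q < n" "p \<noteq> q" "y p = y q"
  shows "stdp n y = 0"
  unfolding stdp_def
proof (rule alt_perm_sum)
  fix \<pi> :: "nat \<Rightarrow> nat"
  have "y \<circ> transpose p q = y" using assms(4) by (auto simp: fun_eq_iff transpose_def)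
  then show "prod_list (map (y \<circ> (transpose p q \<circ> \<pi>)) [0..<n]) = prod_list (map (y \<circ> \<pi>) [0..<n])"
    by (simp add: o_assoc)
qed (use assms in auto)

lemma (in vector_space) countable_basis_subspace:
  assumes S: "countable S" and V: "V \<subseteq> span S"
  obtains G where "countable G" "G \<subseteq> V" "V \<subseteq> span G"
proof -
  obtain B where B: "B \<subseteq> V" "independent B" "V \<subseteq> span B"
    using maximal_independent_subset by blast
  have "B \<subseteq> (\<Union>t\<in>{t. finite t \<and> t \<subseteq> S}. B \<inter> span t)"
  proof
    fix b assume "b \<in> B"
    then have "b \<in> span S" using B V by blast
    then obtain t r where "finite t" "t \<subseteq> S" "b = (\<Sum>a\<in>t. r a *s a)"
      unfolding span_explicit by blast
    moreover then have "b \<in> span t" by (auto intro: span_sum span_scale span_base)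
    ultimately show "b \<in> (\<Union>t\<in>{t. finite t \<and> t \<subseteq> S}. B \<inter> span t)" using \<open>b \<in> B\<close> by blast
  qed
  moreover have "countable (\<Union>t\<in>{t. finite t \<and> t \<subseteq> S}. B \<inter> span t)"
  proof (rule countable_UN)
    show "countable {t. finite t \<and> t \<subseteq> S}" using countable_Collect_finite_subset[OF S] .
    fix t assume "t \<in> {t. finite t \<and> t \<subseteq> S}"
    then have "finite (B \<inter> span t)"
      using independent_span_bound[of t "B \<inter> span t"] independent_mono[OF B(2)] by auto
    then show "countable (B \<inter> span t)" by (rule countable_finite)
  qed
  ultimately have "countable B" by (rule countable_subset)
  then show ?thesis using that B by blast
qed


definition perm_of :: "nat \<Rightarrow> nat list \<Rightarrow> nat \<Rightarrow> nat" where
  "perm_of n w i = (if i < n then w ! i else i)"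

definition Wn :: "nat \<Rightarrow> nat list set" where
  "Wn n = (\<lambda>\<pi>. map \<pi> [0..<n]) ` {\<pi>. \<pi> permutes {..<n}}"

definition pcoef :: "nat \<Rightarrow> nat list \<Rightarrow> 'k::field" where
  "pcoef n w = (if w \<in> Wn n then of_int (sign (perm_of n w)) else 0)"

lemma perm_of_map: "\<pi> permutes {..<n} \<Longrightarrow> perm_of n (map \<pi> [0..<n]) = \<pi>"
  unfolding perm_of_def by (auto simp: fun_eq_iff permutes_not_in)

lemma sign_pm: "sign \<pi> = 1 \<or> sign \<pi> = -1"
  unfolding sign_def by simp

lemma pcoef_support: "{w. (pcoef n w :: 'k::field) \<noteq> 0} = Wn n"
proof -
  have "(of_int (sign \<pi>) :: 'k) \<noteq> 0" for \<pi>
    using sign_pm[of \<pi>] by auto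
  then show ?thesis unfolding pcoef_def by auto
qed

lemma Wn_finite: "finite (Wn n)"
  unfolding Wn_def by (rule finite_imageI) (simp add: finite_permutations)

lemma Wn_inj: "inj_on (\<lambda>\<pi>. map \<pi> [0..<n]) {\<pi>. \<pi> permutes {..<n}}"
  by (rule inj_onI) (metis mem_Collect_eq perm_of_map)

lemma pcoef_nonzero: "\<exists>w. (pcoef n w :: 'k::field) \<noteq> 0"
proof -
  have "map id [0..<n] \<in> Wn n" unfolding Wn_def using permutes_id by blast
  then show ?thesis using pcoef_support[where 'k='k] by blast
qed

locale kalg = vector_space sc for sc :: "'k::field \<Rightarrow> 'a::ring_1 \<Rightarrow> 'a" +
  assumes scl: "sc c (x * y) = sc c x * y" and scr: "sc c (x * y) = x * sc c y"
begin

lemma mult_span_closed: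
  assumes x: "x \<in> span M" and y: "y \<in> span N" and MN: "\<And>m n. m \<in> M \<Longrightarrow> n \<in> N \<Longrightarrow> m * n \<in> span P"
  shows "x * y \<in> span P"
proof -
  have 1: "m * z \<in> span P" if "m \<in> M" "z \<in> span N" for m z
    using that(2)
  proof (induction rule: span_induct)
    case base show ?case
      by (rule subspaceI) (auto simp: distrib_left span_add span_zero scr[symmetric] span_scale)
  next
    case (step n) then show ?case using MN that by blast
  qed
  have "\<forall>y\<in>span N. x * y \<in> span P"
    using x
  proof (induction rule: span_induct)
    case base show ?case
      by (rule subspaceI) (auto simp: distrib_right span_add span_zero scl[symmetric] span_scale)
  next
    case (step m) then show ?case using 1 by blast
  qed
  then show ?thesis using y by blast
qed

lemma mult_span_zero:
  assumes x: "x \<in> span M" and y: "y \<in> span N" and MN: "\<And>m n. m \<in> M \<Longrightarrow> n \<in> N \<Longrightarrow> m * n = 0"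
  shows "x * y = 0"
  using mult_span_closed[OF x y, of "{}"] MN by simp

lemma ideal_subspace: "two_sided_ideal J \<Longrightarrow> subspace J"
  unfolding two_sided_ideal_def
  by (rule subspaceI) (auto, metis mult.right_neutral scr)

lemma ideal_span_eq: "two_sided_ideal J \<Longrightarrow> span J = J"
  using ideal_subspace span_eq_iff by blast

definition ideal_span :: "'a set \<Rightarrow> 'a set" where
  "ideal_span M = span {a * m * b | a m b. m \<in> M}"

lemma ideal_span_ideal: "two_sided_ideal (ideal_span M)"
proof -
  let ?G = "{a * m * b | a m b. m \<in> M}"
  have L: "c * x \<in> ideal_span M" if "x \<in> ideal_span M" for c x
  proof -
    have "c * n \<in> span ?G" if "n \<in> ?G" for n
    proof -
      obtain a m b where "n = a * m * b" "m \<in> M" using \<open>n \<in> ?G\<close> by blast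
      then have "c * n = (c * a) * m * b" by (simp add: mult.assoc)
      then have "c * n \<in> ?G" using \<open>m \<in> M\<close> by blast
      then show ?thesis by (rule span_base)
    qed
    then show ?thesis
      using mult_span_closed[of c "{c}" x ?G ?G] that span_base[of c "{c}"]
      unfolding ideal_span_def by blast
  qed
  have R: "x * c \<in> ideal_span M" if "x \<in> ideal_span M" for c x
  proof -
    have "n * c \<in> span ?G" if "n \<in> ?G" for n
    proof -
      obtain a m b where "n = a * m * b" "m \<in> M" using \<open>n \<in> ?G\<close> by blast
      then have "n * c = a * m * (b * c)" by (simp add: mult.assoc)
      then have "n * c \<in> ?G" using \<open>m \<in> M\<close> by blast
      then show ?thesis by (rule span_base)
    qed
    then show ?thesis
      using mult_span_closed[of x ?G c "{c}" ?G] that span_base[of c "{c}"]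
      unfolding ideal_span_def by blast
  qed
  have "subspace (ideal_span M)" unfolding ideal_span_def by simp
  then show ?thesis unfolding two_sided_ideal_def using L R
    by (simp add: subspace_0 subspace_add subspace_neg)
qed

lemma ideal_span_sup: "M \<subseteq> ideal_span M"
  unfolding ideal_span_def
proof
  fix m assume "m \<in> M"
  then have "m \<in> {a * m * b | a m b. m \<in> M}" by (metis (mono_tags, lifting) mem_Collect_eq mult_1_left mult_1_right)
  then show "m \<in> span {a * m * b | a m b. m \<in> M}" by (rule span_base)
qed

lemma ideal_span_min: "two_sided_ideal J \<Longrightarrow> M \<subseteq> J \<Longrightarrow> ideal_span M \<subseteq> J"
  unfolding ideal_span_def
  apply (subst ideal_span_eq[symmetric], assumption)
  apply (rule span_mono)
  apply (auto simp: two_sided_ideal_def)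
  done

lemma ideal_multL: "two_sided_ideal I \<Longrightarrow> x \<in> I \<Longrightarrow> a * x \<in> I"
  unfolding two_sided_ideal_def by blast
lemma ideal_multR: "two_sided_ideal I \<Longrightarrow> x \<in> I \<Longrightarrow> x * a \<in> I"
  unfolding two_sided_ideal_def by blast
lemma ideal_zero: "two_sided_ideal I \<Longrightarrow> 0 \<in> I"
  unfolding two_sided_ideal_def by blast

lemma ideal_Int: "two_sided_ideal I \<Longrightarrow> two_sided_ideal J \<Longrightarrow> two_sided_ideal (I \<inter> J)"
  unfolding two_sided_ideal_def by blast

lemma finite_codim_decomp:
  fixes J :: "'a set"
  assumes J: "two_sided_ideal J" and F: "span (J \<union> F) = UNIV"
  obtains u s where "u \<in> J" "s \<in> span F" "a = u + s"
proof -
  have "a \<in> span (J \<union> F)" using F by simp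
  then show ?thesis using that unfolding span_Un ideal_span_eq[OF J] by blast
qed

lemma no_annihilated:
  fixes J :: "'a set" and y :: 'a
  assumes JI: "just_infinite sc" and J: "two_sided_ideal J" "J \<noteq> {0}" and y: "y \<noteq> 0"
    and ann: "\<And>a j. j \<in> J \<Longrightarrow> j * y = 0 \<and> a * y * j = 0"
  shows False
proof -
  obtain F where F: "finite F" "span (J \<union> F) = UNIV"
    using JI J unfolding just_infinite_def finite_codim_def by blast
  define W where "W = (\<lambda>(f, g). f * y * g) ` (F \<times> F)"
  have Wfin: "finite W" unfolding W_def using F by simp
  let ?G = "{a * m * b | a m b. m \<in> {y}}"
  have G: "n \<in> span W" if "n \<in> ?G" for n
  proof -
    obtain a b where n: "n = a * y * b" using \<open>n \<in> ?G\<close> by blast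
    obtain u s where us: "u \<in> J" "s \<in> span F" "a = u + s"
      using finite_codim_decomp[OF J(1) F(2)] by blast
    obtain u' s' where us': "u' \<in> J" "s' \<in> span F" "b = u' + s'"
      using finite_codim_decomp[OF J(1) F(2)] by blast
    have "n = s * y * s'"
    proof -
      have "a * y = s * y" unfolding us(3) distrib_right using ann[OF us(1)] by simp
      then have "n = s * y * b" unfolding n by simp
      also have "\<dots> = s * y * s'" unfolding us'(3) distrib_left using ann[OF us'(1), of s] by simp
      finally show ?thesis .
    qed
    have sy: "s * y \<in> span ((\<lambda>f. f * y) ` F)"
    proof (rule mult_span_closed[OF us(2) span_base[of y "{y}"]])
      fix m n assume "m \<in> F" "n \<in> {y}"
      then have "m * n \<in> (\<lambda>f. f * y) ` F" by blast
      then show "m * n \<in> span ((\<lambda>f. f * y) ` F)" by (rule span_base)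
    qed simp
    have "(s * y) * s' \<in> span W"
    proof (rule mult_span_closed[OF sy us'(2)])
      fix m n assume "m \<in> (\<lambda>f. f * y) ` F" "n \<in> F"
      then obtain f where "f \<in> F" "m = f * y" by blast
      then have "m * n \<in> W" unfolding W_def using \<open>n \<in> F\<close> by force
      then show "m * n \<in> span W" by (rule span_base)
    qed
    then show ?thesis using \<open>n = s * y * s'\<close> by simp
  qed
  have KW: "ideal_span {y} \<subseteq> span W"
    unfolding ideal_span_def by (rule span_minimal) (use G in blast, simp)
  have "y \<in> ideal_span {y}" using ideal_span_sup by blast
  then have "ideal_span {y} \<noteq> {0}" using y by blast
  then obtain F' where F': "finite F'" "span (ideal_span {y} \<union> F') = UNIV"
    using JI ideal_span_ideal unfolding just_infinite_def finite_codim_def by blast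
  have "span (ideal_span {y} \<union> F') \<subseteq> span (W \<union> F')"
  proof (rule span_minimal)
    show "ideal_span {y} \<union> F' \<subseteq> span (W \<union> F')"
      using KW span_mono[of W "W \<union> F'"] span_superset[of "W \<union> F'"] by blast
  qed simp
  then have "span (W \<union> F') = UNIV" using F' by blast
  then show False using JI Wfin F'(1) unfolding just_infinite_def infinite_dimensional_def by blast
qed

lemma prime:
  fixes w x :: 'a
  assumes JI: "just_infinite sc" and w: "w \<noteq> 0" and x: "x \<noteq> 0" and wx: "\<And>a. w * a * x = 0"
  shows False
proof -
  define I where "I = ideal_span {w}"
  define J where "J = ideal_span {x}"
  have I: "two_sided_ideal I" and J: "two_sided_ideal J" unfolding I_def J_def by (rule ideal_span_ideal)+
  have wI: "w \<in> I" and xJ: "x \<in> J" unfolding I_def J_def using ideal_span_sup by blast+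
  have IJ: "u * v = 0" if "u \<in> I" "v \<in> J" for u v
  proof (rule mult_span_zero[OF that[unfolded I_def J_def ideal_span_def]])
    fix m n assume "m \<in> {a * m * b | a m b. m \<in> {w}}" "n \<in> {a * m * b | a m b. m \<in> {x}}"
    then obtain a b c d where "m = a * w * b" "n = c * x * d" by blast
    then have "m * n = a * (w * (b * c) * x) * d" by (simp add: mult.assoc)
    then show "m * n = 0" using wx by simp
  qed
  show False
  proof (cases "I \<inter> J = {0}")
    case True
    show False
    proof (rule no_annihilated[OF JI J _ w])
      show "J \<noteq> {0}" using xJ x by blast
      fix a j assume j: "j \<in> J"
      have "j * w \<in> I" "j * w \<in> J" using ideal_multL[OF I wI] ideal_multR[OF J j] by auto
      then have "j * w = 0" using True by blast
      moreover have "a * w \<in> I" using ideal_multL[OF I wI] .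
      ultimately show "j * w = 0 \<and> a * w * j = 0" using IJ j by blast
    qed
  next
    case False
    then obtain y where y: "y \<in> I" "y \<in> J" "y \<noteq> 0" using ideal_zero[OF I] ideal_zero[OF J] by blast
    show False
    proof (rule no_annihilated[OF JI ideal_Int[OF I J] False y(3)])
      fix a j assume j: "j \<in> I \<inter> J"
      have "a * y \<in> I" using ideal_multL[OF I y(1)] .
      then show "j * y = 0 \<and> a * y * j = 0" using IJ j y by blast
    qed
  qed
qed

definition multilin :: "nat set \<Rightarrow> ((nat \<Rightarrow> 'a) \<Rightarrow> 'a) \<Rightarrow> bool" where
  "multilin P \<Phi> \<longleftrightarrow> (\<forall>p\<in>P. \<forall>y u v c. \<Phi> (y(p := u + v)) = \<Phi> (y(p := u)) + \<Phi> (y(p := v)) \<and>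
      \<Phi> (y(p := sc c u)) = sc c (\<Phi> (y(p := u))))"

definition altern :: "nat set \<Rightarrow> ((nat \<Rightarrow> 'a) \<Rightarrow> 'a) \<Rightarrow> bool" where
  "altern P \<Phi> \<longleftrightarrow> (\<forall>p\<in>P. \<forall>q\<in>P. \<forall>y. p \<noteq> q \<longrightarrow> y p = y q \<longrightarrow> \<Phi> y = 0)"

definition absorb :: "'a set \<Rightarrow> nat set \<Rightarrow> ((nat \<Rightarrow> 'a) \<Rightarrow> 'a) \<Rightarrow> bool" where
  "absorb J P \<Phi> \<longleftrightarrow> (\<forall>p\<in>P. \<forall>y. y p \<in> J \<longrightarrow> \<Phi> y \<in> J)"

lemma expansion:
  assumes ml: "multilin P \<Phi>" and al: "altern P \<Phi>" and Q: "finite Q" "Q \<subseteq> P"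
    and yz: "\<And>p. y p = z p + sc (c p) f"
  shows "\<Phi> y = \<Phi> (\<lambda>p. if p \<in> Q then z p else y p)
     + (\<Sum>i\<in>Q. sc (c i) (\<Phi> ((\<lambda>p. if p \<in> Q then z p else y p)(i := f))))"
  using Q
proof (induction Q rule: finite_induct)
  case empty
  then show ?case by simp
next
  case (insert j Q)
  define w where "w = (\<lambda>p. if p \<in> Q then z p else y p)"
  define w' where "w' = (\<lambda>p. if p \<in> insert j Q then z p else y p)"
  have jP: "j \<in> P" using insert by simp
  have QP: "Q \<subseteq> P" using insert by simp
  have IH: "\<Phi> y = \<Phi> w + (\<Sum>i\<in>Q. sc (c i) (\<Phi> (w(i := f))))"
    using insert.IH[OF QP] unfolding w_def .
  have e1: "w = w'(j := z j + sc (c j) f)"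
    unfolding w_def w'_def using insert(2) yz by (auto simp: fun_eq_iff)
  have e2: "w' = w'(j := z j)" unfolding w'_def by (auto simp: fun_eq_iff)
  have A: "\<Phi> w = \<Phi> w' + sc (c j) (\<Phi> (w'(j := f)))"
    using ml jP unfolding multilin_def e1 by (metis e2)
  have B: "\<Phi> (w(i := f)) = \<Phi> (w'(i := f))" if "i \<in> Q" for i
  proof -
    have iP: "i \<in> P" and ij: "i \<noteq> j" using that insert by auto
    have e3: "w(i := f) = (w'(i := f))(j := z j + sc (c j) f)"
      unfolding w_def w'_def using insert(2) yz ij that by (auto simp: fun_eq_iff)
    have e4: "w'(i := f) = (w'(i := f))(j := z j)" unfolding w'_def using ij by (auto simp: fun_eq_iff)
    have "\<Phi> ((w'(i := f))(j := f)) = 0"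
      using al iP jP ij unfolding altern_def by (metis fun_upd_same fun_upd_twist)
    then show ?thesis using ml jP unfolding multilin_def e3 by (metis e4 add_0_right scale_zero_right)
  qed
  have "\<Phi> y = \<Phi> w' + sc (c j) (\<Phi> (w'(j := f))) + (\<Sum>i\<in>Q. sc (c i) (\<Phi> (w'(i := f))))"
    using IH A B by simp
  also have "\<dots> = \<Phi> w' + (\<Sum>i\<in>insert j Q. sc (c i) (\<Phi> (w'(i := f))))"
    using insert(1,2) by (simp add: add.assoc)
  finally show ?case unfolding w'_def .
qed

lemma alt_in_ideal:
  fixes J :: "'a set" and F :: "'a set"
  assumes J: "two_sided_ideal J" and F: "finite F"
  shows "\<forall>P \<Phi>. finite P \<and> card F < card P \<and> multilin P \<Phi> \<and> altern P \<Phi> \<and> absorb J P \<Phi> \<longrightarrow>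
     (\<forall>y. (\<forall>p\<in>P. y p \<in> span (J \<union> F)) \<longrightarrow> \<Phi> y \<in> J)"
  using F
proof (induction F rule: finite_induct)
  case empty
  show ?case
  proof (intro allI impI)
    fix P \<Phi> y assume H: "finite P \<and> card {} < card P \<and> multilin P \<Phi> \<and> altern P \<Phi> \<and> absorb J P \<Phi>"
      and y: "\<forall>p\<in>P. y p \<in> span (J \<union> {})"
    then obtain p where "p \<in> P" by fastforce
    then have "y p \<in> J" using y ideal_span_eq[OF J] by simp
    then show "\<Phi> y \<in> J" using H \<open>p \<in> P\<close> unfolding absorb_def by blast
  qed
next
  case (insert f F)
  show ?case
  proof (intro allI impI)
    fix P \<Phi> y assume H: "finite P \<and> card (insert f F) < card P \<and> multilin P \<Phi> \<and> altern P \<Phi> \<and> absorb J P \<Phi>"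
      and y: "\<forall>p\<in>P. y p \<in> span (J \<union> insert f F)"
    have cardP: "card F + 1 < card P" using H insert(1,2) by simp
    define c where "c p = (SOME k. y p - sc k f \<in> span (J \<union> F))" for p
    define z where "z p = y p - sc (c p) f" for p
    have yz: "y p = z p + sc (c p) f" for p unfolding z_def by simp
    have zs: "z p \<in> span (J \<union> F)" if "p \<in> P" for p
    proof -
      have "y p \<in> span (insert f (J \<union> F))" using y that by simp
      then have "\<exists>k. y p - sc k f \<in> span (J \<union> F)" by (simp add: span_breakdown_eq)
      then show ?thesis unfolding z_def c_def by (rule someI_ex)
    qed
    define w where "w = (\<lambda>p. if p \<in> P then z p else y p)"
    have exp: "\<Phi> y = \<Phi> w + (\<Sum>i\<in>P. sc (c i) (\<Phi> (w(i := f))))"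
      unfolding w_def by (rule expansion[of P \<Phi> P y z c f]) (use H yz in auto)
    have wP: "\<forall>p\<in>P. w p \<in> span (J \<union> F)" unfolding w_def using zs by simp
    have cP: "card F < card P" using cardP by simp
    have t1: "\<Phi> w \<in> J" using insert.IH H cP wP by blast
    have t2: "\<Phi> (w(i := f)) \<in> J" if iP: "i \<in> P" for i
    proof -
      define \<Psi> where "\<Psi> v = \<Phi> (v(i := f))" for v
      have fin: "finite (P - {i})" using H by simp
      have card: "card F < card (P - {i})" using cardP iP H by simp
      have ml: "multilin (P - {i}) \<Psi>"
        using H unfolding multilin_def \<Psi>_def by (metis DiffE fun_upd_twist insertI1)
      have al: "altern (P - {i}) \<Psi>"
        using H unfolding altern_def \<Psi>_def
        by (metis (no_types, lifting) DiffD1 DiffD2 fun_upd_apply insertI1)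
      have ab: "absorb J (P - {i}) \<Psi>"
        using H unfolding absorb_def \<Psi>_def by (metis DiffE fun_upd_apply insertI1)
      have "\<Psi> w \<in> J" using insert(3) fin card ml al ab wP by blast
      then show ?thesis unfolding \<Psi>_def .
    qed
    have "(\<Sum>i\<in>P. sc (c i) (\<Phi> (w(i := f)))) \<in> J"
      using ideal_subspace[OF J] t2 by (intro subspace_sum) (auto intro: subspace_scale)
    then show "\<Phi> y \<in> J" unfolding exp using t1 ideal_subspace[OF J] by (simp add: subspace_add)
  qed
qed

lemma prod_lin_add:
  fixes y :: "nat \<Rightarrow> 'a"
  shows "distinct xs \<Longrightarrow> p \<in> set xs \<Longrightarrow> prod_list (map (y(p := u + v)) xs) =
     prod_list (map (y(p := u)) xs) + prod_list (map (y(p := v)) xs)"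
proof (induction xs)
  case Nil then show ?case by simp
next
  case (Cons x xs)
  show ?case
  proof (cases "x = p")
    case True
    then have "p \<notin> set xs" using Cons by simp
    have M: "map (y(p := w)) xs = map y xs" for w using \<open>p \<notin> set xs\<close> by (intro map_cong) auto
    show ?thesis using True by (simp add: M fun_upd_same algebra_simps del: fun_upd_apply)
  next
    case False
    then show ?thesis using Cons by (simp add: distrib_left)
  qed
qed

lemma prod_lin_sc:
  "distinct xs \<Longrightarrow> p \<in> set xs \<Longrightarrow> prod_list (map (y(p := sc c u)) xs) =
     sc c (prod_list (map (y(p := u)) xs))"
proof (induction xs)
  case Nil then show ?case by simp
next
  case (Cons x xs)
  show ?case
  proof (cases "x = p")
    case True
    then have "p \<notin> set xs" using Cons by simp
    have M: "map (y(p := w)) xs = map y xs" for w using \<open>p \<notin> set xs\<close> by (intro map_cong) auto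
    show ?thesis using True by (simp add: M scl fun_upd_same del: fun_upd_apply)
  next
    case False
    then show ?thesis using Cons by (simp add: scr)
  qed
qed

lemma prod_absorb:
  fixes y :: "nat \<Rightarrow> 'a"
  shows "two_sided_ideal J \<Longrightarrow> p \<in> set xs \<Longrightarrow> y p \<in> J \<Longrightarrow> prod_list (map y xs) \<in> J"
proof (induction xs)
  case Nil then show ?case by simp
next
  case (Cons x xs)
  show ?case
  proof (cases "x = p")
    case True
    then show ?thesis using Cons ideal_multR by simp
  next
    case False
    then show ?thesis using Cons ideal_multL by simp
  qed
qed

lemma perm_list:
  assumes "\<pi> permutes {..<n}"
  shows "distinct (map \<pi> [0..<n])" "set (map \<pi> [0..<n]) = {..<n}"
proof -
  show "distinct (map \<pi> [0..<n])"
    using permutes_inj_on[OF assms] by (simp add: distinct_map inj_on_def)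
  show "set (map \<pi> [0..<n]) = {..<n}"
    using permutes_image[OF assms] by (simp add: atLeast0LessThan)
qed

lemma stdp_multilin: "multilin {..<n} (stdp n)"
  unfolding multilin_def
proof (intro ballI allI conjI)
  fix p c and y :: "nat \<Rightarrow> 'a" and u v :: 'a assume p: "p \<in> {..<n}"
  have L: "prod_list (map (y(p := u + v) \<circ> \<pi>) [0..<n]) =
     prod_list (map (y(p := u) \<circ> \<pi>) [0..<n]) + prod_list (map (y(p := v) \<circ> \<pi>) [0..<n])"
    if "\<pi> permutes {..<n}" for \<pi>
  proof -
    have "p \<in> set (map \<pi> [0..<n])" using p perm_list(2)[OF that] by simp
    from prod_lin_add[OF perm_list(1)[OF that] this, of y u v] show ?thesis by (simp only: map_map)
  qed
  show "stdp n (y(p := u + v)) = stdp n (y(p := u)) + stdp n (y(p := v))"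
    unfolding stdp_def by (simp add: L distrib_left sum.distrib)
  have S: "prod_list (map (y(p := sc c u) \<circ> \<pi>) [0..<n]) =
     sc c (prod_list (map (y(p := u) \<circ> \<pi>) [0..<n]))"
    if "\<pi> permutes {..<n}" for \<pi>
  proof -
    have "p \<in> set (map \<pi> [0..<n])" using p perm_list(2)[OF that] by simp
    from prod_lin_sc[OF perm_list(1)[OF that] this, of y c u] show ?thesis by (simp only: map_map)
  qed
  show "stdp n (y(p := sc c u)) = sc c (stdp n (y(p := u)))"
    unfolding stdp_def by (simp add: S scr[symmetric] scale_sum_right)
qed

lemma stdp_altern: "altern {..<n} (stdp n)"
  unfolding altern_def using stdp_alt by blast

lemma stdp_absorb:
  fixes J :: "'a set"
  assumes J: "two_sided_ideal J"
  shows "absorb J {..<n} (stdp n)"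
  unfolding absorb_def
proof (intro ballI allI impI)
  fix p and y :: "nat \<Rightarrow> 'a" assume p: "p \<in> {..<n}" and yp: "y p \<in> J"
  have "of_int (sign \<pi>) * prod_list (map (y \<circ> \<pi>) [0..<n]) \<in> J" if "\<pi> permutes {..<n}" for \<pi>
  proof -
    have "p \<in> set (map \<pi> [0..<n])" using p perm_list(2)[OF that] by simp
    from prod_absorb[of J p "map \<pi> [0..<n]" y, OF J this yp] have "prod_list (map (y \<circ> \<pi>) [0..<n]) \<in> J" by (simp only: map_map)
    then show ?thesis using ideal_multL[OF J] by blast
  qed
  then show "stdp n y \<in> J" unfolding stdp_def
    using ideal_subspace[OF J] by (intro subspace_sum) auto
qed

lemma nc_eval_stdp: "nc_eval sc (pcoef n) \<sigma> = stdp n \<sigma>"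
proof -
  have "nc_eval sc (pcoef n) \<sigma> = (\<Sum>w\<in>Wn n. sc (pcoef n w) (prod_list (map \<sigma> w)))"
    unfolding nc_eval_def pcoef_support ..
  also have "\<dots> = (\<Sum>\<pi>\<in>{\<pi>. \<pi> permutes {..<n}}. sc (pcoef n (map \<pi> [0..<n])) (prod_list (map \<sigma> (map \<pi> [0..<n]))))"
    unfolding Wn_def by (subst sum.reindex[OF Wn_inj]) simp
  also have "\<dots> = stdp n \<sigma>"
    unfolding stdp_def
  proof (rule sum.cong)
    fix \<pi> assume \<pi>: "\<pi> \<in> {\<pi>. \<pi> permutes {..<n}}"
    have "map \<pi> [0..<n] \<in> Wn n" unfolding Wn_def using \<pi> by blast
    then have pc: "pcoef n (map \<pi> [0..<n]) = of_int (sign \<pi>)"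
      unfolding pcoef_def using perm_of_map \<pi> by simp
    have "sc (of_int (sign \<pi>)) X = of_int (sign \<pi>) * X" for X
      using sign_pm[of \<pi>] by (auto simp: scale_minus_left)
    then show "sc (pcoef n (map \<pi> [0..<n])) (prod_list (map \<sigma> (map \<pi> [0..<n]))) =
        of_int (sign \<pi>) * prod_list (map (\<sigma> \<circ> \<pi>) [0..<n])"
      unfolding pc by (simp only: map_map)
  qed simp
  finally show ?thesis .
qed

lemma stdp_nonzero:
  assumes "\<not> satisfies_PI sc" shows "\<exists>\<sigma>::nat \<Rightarrow> 'a. stdp n \<sigma> \<noteq> 0"
proof -
  have "finite {w. (pcoef n w :: 'k) \<noteq> 0}" using Wn_finite pcoef_support by metis
  moreover have "\<exists>w. (pcoef n w :: 'k) \<noteq> 0" by (rule pcoef_nonzero)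
  ultimately obtain \<sigma> where "nc_eval sc (pcoef n) \<sigma> \<noteq> 0"
    using assms unfolding satisfies_PI_def by blast
  then show ?thesis unfolding nc_eval_stdp by blast
qed

definition Tn :: "nat \<Rightarrow> 'a set" where
  "Tn n = ideal_span (range (stdp n))"

lemma Tn_ideal: "two_sided_ideal (Tn n)"
  unfolding Tn_def by (rule ideal_span_ideal)

lemma Tn_nonzero: "\<not> satisfies_PI sc \<Longrightarrow> Tn n \<noteq> {0}"
  using stdp_nonzero[of n] ideal_span_sup[of "range (stdp n)"] unfolding Tn_def by blast

lemma Tn_sub:
  fixes J F :: "'a set"
  assumes J: "two_sided_ideal J" and F: "finite F" "span (J \<union> F) = UNIV"
  shows "Tn (Suc (card F)) \<subseteq> J"
proof -
  let ?n = "Suc (card F)"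
  have H: "finite {..<?n} \<and> card F < card {..<?n} \<and> multilin {..<?n} (stdp ?n) \<and>
      altern {..<?n} (stdp ?n) \<and> absorb J {..<?n} (stdp ?n)"
    using stdp_multilin[of ?n] stdp_altern[of ?n] stdp_absorb[OF J, of ?n] by simp
  have "stdp ?n y \<in> J" for y :: "nat \<Rightarrow> 'a"
    using alt_in_ideal[OF J F(1), rule_format, OF H, of y] F(2) by simp
  then have "range (stdp ?n) \<subseteq> J" by blast
  then show ?thesis unfolding Tn_def by (rule ideal_span_min[OF J])
qed

lemma countable_span:
  assumes "countably_generated sc"
  obtains S :: "'a set" where "countable S" "span S = UNIV"
proof -
  obtain S0 :: "'a set" where S0: "countable S0" "gen_subalgebra sc S0 = UNIV"
    using assms unfolding countably_generated_def by blast
  define M where "M = prod_list ` lists S0"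
  have cM: "countable M" unfolding M_def using S0(1) by simp
  have mul: "x * y \<in> span M" if "x \<in> span M" "y \<in> span M" for x y
  proof (rule mult_span_closed[OF that])
    fix m n assume "m \<in> M" "n \<in> M"
    then obtain xs ys where "xs \<in> lists S0" "ys \<in> lists S0" "m = prod_list xs" "n = prod_list ys"
      unfolding M_def by blast
    then have "m * n \<in> M" unfolding M_def by (auto intro!: image_eqI[of _ _ "xs @ ys"])
    then show "m * n \<in> span M" by (rule span_base)
  qed
  have S0M: "S0 \<subseteq> span M"
  proof
    fix s assume "s \<in> S0"
    then have "prod_list [s] \<in> M" unfolding M_def by (intro imageI) simp
    then show "s \<in> span M" using span_base by fastforce
  qed
  have one: "1 \<in> span M"
  proof -
    have "prod_list [] \<in> M" unfolding M_def by (intro imageI) simp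
    then show ?thesis using span_base by fastforce
  qed
  have "gen_subalgebra sc S0 \<subseteq> span M"
    unfolding gen_subalgebra_def
  proof (rule Inter_lower, intro CollectI conjI ballI allI)
    show "S0 \<subseteq> span M" by (rule S0M)
    show "1 \<in> span M" by (rule one)
    show "x + y \<in> span M" if "x \<in> span M" "y \<in> span M" for x y using that by (rule span_add)
    show "x * y \<in> span M" if "x \<in> span M" "y \<in> span M" for x y using that by (rule mul)
    show "sc c x \<in> span M" if "x \<in> span M" for c x using that by (rule span_scale)
  qed
  then have "span M = UNIV" using S0(2) by blast
  then show ?thesis using that cM by blast
qed

lemma reps_iff: "(I, f) \<in> ext_center_reps \<longleftrightarrow> two_sided_ideal I \<and> I \<noteq> {0} \<and>
      (\<forall>x\<in>I. \<forall>y\<in>I. f (x + y) = f x + f y) \<and>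
      (\<forall>x\<in>I. \<forall>a. f (a * x) = a * f x \<and> f (x * a) = f x * a)"
  unfolding ext_center_reps_def by simp

lemma reps_restrict:
  assumes "(J, f) \<in> ext_center_reps" "two_sided_ideal T" "T \<noteq> {0}" "T \<subseteq> J"
  shows "(T, f) \<in> ext_center_reps"
  using assms unfolding reps_iff by blast

lemma kill:
  fixes f :: "'a \<Rightarrow> 'a" and J :: "'a set"
  assumes JI: "just_infinite sc" and x: "x \<noteq> 0" and xJ: "x \<in> J" and zJ: "z \<in> J"
    and fJ: "\<forall>x\<in>J. \<forall>a. f (a * x) = a * f x \<and> f (x * a) = f x * a"
    and gT: "\<And>v. v \<in> t \<Longrightarrow> \<forall>x\<in>T. \<forall>a. g v (a * x) = a * g v x \<and> g v (x * a) = g v x * a"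
    and xT: "x \<in> T" and zT: "t \<noteq> {} \<Longrightarrow> z \<in> T"
    and h0: "f x = (\<Sum>v\<in>t. sc (r v) (g v x))"
  shows "f z = (\<Sum>v\<in>t. sc (r v) (g v z))"
proof (rule ccontr)
  assume ne: "f z \<noteq> (\<Sum>v\<in>t. sc (r v) (g v z))"
  show False
  proof (rule prime[OF JI _ x])
    show "f z - (\<Sum>v\<in>t. sc (r v) (g v z)) \<noteq> 0" using ne by simp
    fix a
    have f1: "f z * (a * x) = (z * a) * f x"
    proof -
      have "f z * (a * x) = f (z * (a * x))" using fJ zJ by simp
      also have "\<dots> = f ((z * a) * x)" by (simp add: mult.assoc)
      also have "\<dots> = (z * a) * f x" using fJ xJ by simp
      finally show ?thesis .
    qed
    have g1: "g v z * (a * x) = (z * a) * g v x" if "v \<in> t" for v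
    proof -
      have zT': "z \<in> T" using zT that by blast
      have "g v z * (a * x) = g v (z * (a * x))" using gT[OF that] zT' by simp
      also have "\<dots> = g v ((z * a) * x)" by (simp add: mult.assoc)
      also have "\<dots> = (z * a) * g v x" using gT[OF that] xT by simp
      finally show ?thesis .
    qed
    have "(\<Sum>v\<in>t. sc (r v) (g v z)) * (a * x) = (\<Sum>v\<in>t. sc (r v) (g v z * (a * x)))"
      by (simp add: sum_distrib_right scl)
    also have "\<dots> = (\<Sum>v\<in>t. sc (r v) ((z * a) * g v x))"
      using g1 by (intro sum.cong) auto
    also have "\<dots> = (z * a) * (\<Sum>v\<in>t. sc (r v) (g v x))"
      by (simp add: sum_distrib_left scr)
    finally have "(\<Sum>v\<in>t. sc (r v) (g v z)) * (a * x) = (z * a) * f x" using h0 by simp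
    then have "(f z - (\<Sum>v\<in>t. sc (r v) (g v z))) * (a * x) = 0"
      using f1 by (simp add: left_diff_distrib)
    then show "(f z - (\<Sum>v\<in>t. sc (r v) (g v z))) * a * x = 0" by (simp add: mult.assoc)
  qed
qed

theorem main:
  assumes JI: "just_infinite sc" and CG: "countably_generated sc" and NPI: "\<not> satisfies_PI sc"
  shows "ext_center_countable_dim sc"
proof -
  obtain S :: "'a set" where S: "countable S" "span S = UNIV" using countable_span[OF CG] by blast
  define xn where "xn n = (SOME x. x \<in> Tn n \<and> x \<noteq> 0)" for n
  have xn: "xn n \<in> Tn n" "xn n \<noteq> 0" for n
  proof -
    have "\<exists>x. x \<in> Tn n \<and> x \<noteq> 0" using Tn_nonzero[OF NPI, of n] ideal_zero[OF Tn_ideal, of n] by blast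
    then have "xn n \<in> Tn n \<and> xn n \<noteq> 0" unfolding xn_def by (rule someI_ex)
    then show "xn n \<in> Tn n" "xn n \<noteq> 0" by blast+
  qed
  define V where "V n = {g (xn n) | g. (Tn n, g) \<in> ext_center_reps}" for n
  define G where "G n = (SOME G. countable G \<and> G \<subseteq> V n \<and> V n \<subseteq> span G)" for n
  have G: "countable (G n) \<and> G n \<subseteq> V n \<and> V n \<subseteq> span (G n)" for n
  proof -
    have "V n \<subseteq> span S" using S(2) by simp
    then obtain G0 where "countable G0" "G0 \<subseteq> V n" "V n \<subseteq> span G0"
      by (rule countable_basis_subspace[OF S(1)])
    then have "\<exists>G. countable G \<and> G \<subseteq> V n \<and> V n \<subseteq> span G" by blast
    then show ?thesis unfolding G_def by (rule someI_ex)
  qed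
  define gs where "gs n v = (SOME g. (Tn n, g) \<in> ext_center_reps \<and> g (xn n) = v)" for n v
  have gs: "(Tn n, gs n v) \<in> ext_center_reps \<and> gs n v (xn n) = v" if "v \<in> G n" for n v
  proof -
    have "v \<in> V n" using G that by blast
    then have "\<exists>g. (Tn n, g) \<in> ext_center_reps \<and> g (xn n) = v" unfolding V_def by blast
    then show ?thesis unfolding gs_def by (rule someI_ex)
  qed
  define B where "B = (\<Union>n. (\<lambda>v. (Tn n, gs n v)) ` G n)"
  have cB: "countable B" unfolding B_def
  proof (rule countable_UN)
    fix n show "countable ((\<lambda>v. (Tn n, gs n v)) ` G n)" using G[of n] by (intro countable_image) blast
  qed simp
  have BR: "B \<subseteq> ext_center_reps"
  proof
    fix q assume "q \<in> B"
    then obtain n v where "v \<in> G n" "q = (Tn n, gs n v)" unfolding B_def by blast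
    then show "q \<in> ext_center_reps" using gs by simp
  qed
  have allp: "\<forall>p\<in>ext_center_reps. \<exists>F c. finite F \<and> F \<subseteq> B \<and>
        (\<forall>x\<in>fst p \<inter> \<Inter> (fst ` F). snd p x = (\<Sum>q\<in>F. sc (c q) (snd q x)))"
  proof
    fix p :: "'a set \<times> ('a \<Rightarrow> 'a)" assume p: "p \<in> ext_center_reps"
    obtain J :: "'a set" and f :: "'a \<Rightarrow> 'a" where pJf: "p = (J, f)" by (cases p)
    have Jf: "(J, f) \<in> ext_center_reps" using p pJf by simp
    then have J: "two_sided_ideal J" "J \<noteq> {0}" unfolding reps_iff by simp_all
    have fJ: "\<forall>x\<in>J. \<forall>a. f (a * x) = a * f x \<and> f (x * a) = f x * a" using Jf unfolding reps_iff by (elim conjE)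
    have "finite_codim sc J" using JI J unfolding just_infinite_def by blast
    then obtain F :: "'a set" where F: "finite F" "span (J \<union> F) = UNIV"
      unfolding finite_codim_def by blast
    define n where "n = Suc (card F)"
    have TJ: "Tn n \<subseteq> J" unfolding n_def by (rule Tn_sub[OF J(1) F])
    have "(Tn n, f) \<in> ext_center_reps"
      by (rule reps_restrict[OF Jf Tn_ideal Tn_nonzero[OF NPI] TJ])
    then have "f (xn n) \<in> V n" unfolding V_def by blast
    then have "f (xn n) \<in> span (G n)" using G by blast
    then obtain t r where t: "finite t" "t \<subseteq> G n" and fx: "f (xn n) = (\<Sum>a\<in>t. sc (r a) a)"
      unfolding span_explicit by blast
    define emb where "emb v = (Tn n, gs n v)" for v
    have inj: "inj_on emb t"
    proof (rule inj_onI)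
      fix v v' :: 'a assume "v \<in> t" "v' \<in> t" "emb v = emb v'"
      then have "gs n v = gs n v'" by (simp add: emb_def)
      moreover have "gs n v (xn n) = v" using gs[OF subsetD[OF t(2) \<open>v \<in> t\<close>]] by simp
      moreover have "gs n v' (xn n) = v'" using gs[OF subsetD[OF t(2) \<open>v' \<in> t\<close>]] by simp
      ultimately show "v = v'" by metis
    qed
    define c where "c q = r (snd q (xn n))" for q :: "'a set \<times> ('a \<Rightarrow> 'a)"
    have finF: "finite (emb ` t)" using t by simp
    have subB: "emb ` t \<subseteq> B"
    proof -
      have "emb ` t \<subseteq> emb ` G n" using t(2) by (rule image_mono)
      also have "emb ` G n \<subseteq> B" unfolding B_def emb_def by (rule UN_upper) simp
      finally show ?thesis .
    qed
    have eq: "snd p z = (\<Sum>q\<in>emb ` t. sc (c q) (snd q z))" if z: "z \<in> fst p \<inter> \<Inter> (fst ` emb ` t)" for z :: 'a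
    proof -
      have sumeq: "(\<Sum>q\<in>emb ` t. sc (c q) (snd q y)) = (\<Sum>v\<in>t. sc (r v) (gs n v y))" for y
      proof -
        have "(\<Sum>q\<in>emb ` t. sc (c q) (snd q y)) = (\<Sum>v\<in>t. sc (c (emb v)) (snd (emb v) y))"
          by (rule sum.reindex[OF inj, unfolded o_def])
        also have "\<dots> = (\<Sum>v\<in>t. sc (r v) (gs n v y))"
        proof (intro sum.cong refl)
          fix v assume v: "v \<in> t"
          have "gs n v (xn n) = v" using gs[OF subsetD[OF t(2) v]] by simp
          then have "c (emb v) = r v" unfolding c_def emb_def by simp
          moreover have "snd (emb v) y = gs n v y" unfolding emb_def by simp
          ultimately show "sc (c (emb v)) (snd (emb v) y) = sc (r v) (gs n v y)" by simp
        qed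
        finally show ?thesis .
      qed
      have zJ: "z \<in> J" using z pJf by simp
      have zT: "z \<in> Tn n" if tne: "t \<noteq> {}"
      proof -
        obtain v where v: "v \<in> t" using tne by blast
        have "fst (emb v) \<in> fst ` emb ` t" using v by blast
        moreover have "fst (emb v) = Tn n" unfolding emb_def by simp
        ultimately show ?thesis using z by blast
      qed
      have h0: "f (xn n) = (\<Sum>v\<in>t. sc (r v) (gs n v (xn n)))"
        unfolding fx
      proof (intro sum.cong refl)
        fix v assume v: "v \<in> t"
        have "gs n v (xn n) = v" using gs[OF subsetD[OF t(2) v]] by simp
        then show "sc (r v) v = sc (r v) (gs n v (xn n))" by simp
      qed
      have gT: "\<forall>x\<in>Tn n. \<forall>a. gs n v (a * x) = a * gs n v x \<and> gs n v (x * a) = gs n v x * a"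
        if "v \<in> t" for v
      proof -
        have "v \<in> G n" using that t(2) by blast
        then have "(Tn n, gs n v) \<in> ext_center_reps" using gs by blast
        then show ?thesis unfolding reps_iff by (elim conjE)
      qed
      have "f z = (\<Sum>v\<in>t. sc (r v) (gs n v z))"
        by (rule kill[OF JI xn(2) subsetD[OF TJ xn(1)] zJ fJ gT xn(1) zT h0]) simp
      then show "snd p z = (\<Sum>q\<in>emb ` t. sc (c q) (snd q z))" unfolding sumeq pJf by simp
    qed
    show "\<exists>F c. finite F \<and> F \<subseteq> B \<and>
        (\<forall>x\<in>fst p \<inter> \<Inter> (fst ` F). snd p x = (\<Sum>q\<in>F. sc (c q) (snd q x)))"
      apply (rule exI[of _ "emb ` t"], rule exI[of _ c])
      using finF subB eq by blast
  qed
  show ?thesis unfolding ext_center_countable_dim_def using cB BR allp by blast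
qed

end

lemma kalg_of: "k_algebra sc \<Longrightarrow> kalg sc"
  unfolding k_algebra_def kalg_def kalg_axioms_def by blast

theorem proposition6p2:
  fixes sc :: "'k::field \<Rightarrow> 'a::ring_1 \<Rightarrow> 'a"
  assumes "k_algebra sc"
    and "just_infinite sc"
    and "countably_generated sc"
    and "\<not> satisfies_PI sc"
  shows "ext_center_countable_dim sc"
  by (rule kalg.main[OF kalg_of[OF assms(1)] assms(2-4)])

end
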